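(* Let $\mathcal{A}\in\mathbb{C}^{I_{1\ldots N}\times I_{1\ldots N}}$ with $\mathcal{A}\neq\mathcal{O}$, and let $\mathcal{M},\mathcal{N}\in\mathbb{C}^{I_{1\ldots N}\times I_{1\ldots N}}$ be Hermitian positive definite tensors. Then $$1\le\|\mathcal{A}\|_{\mathcal{M}\mathcal{N}}\,\|\mathcal{A}^{\dagger}_{\mathcal{M},\mathcal{N}}\|_{\mathcal{N}\mathcal{M}}\le4\,w(\tilde{\mathcal{A}})\,w(\tilde{\mathcal{A}}^{\dagger}),$$ where $\tilde{\mathcal{A}}=\mathcal{M}^{1/2}*_N\mathcal{A}*_N\mathcal{N}^{-1/2}$.
   Context: Write $I_{1\ldots N}$ for $I_1\times\cdots\times I_N$; $\mathcal{O}$ is the zero tensor. Einstein product: $(\mathcal{A}*_N\mathcal{B})_{i_1\ldots i_Nj_1\ldots j_L}=\sum_{k_1,\ldots,k_N}a_{i_1\ldots i_Nk_1\ldots k_N}b_{k_1\ldots k_Nj_1\ldots j_L}$ (also when $\mathcal{B}\in\mathbb{C}^{I_{1\ldots N}}$). $\mathcal{A}^H$ is the conjugate transpose; inverses are w.r.t. $*_N$. $\langle\mathcal{X},\mathcal{Y}\rangle=\mathcal{Y}^H*_N\mathcal{X}$, $\|\mathcal{X}\|=\langle\mathcal{X},\mathcal{X}\rangle^{1/2}$. $\mathcal{M}$ is Hermitian positive definite if $\mathcal{M}^H=\mathcal{M}$ and $\langle\mathcal{M}*_N\mathcal{X},\mathcal{X}\rangle>0$ for nonzero $\mathcal{X}$;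 $\mathcal{M}^{1/2}$ is its unique Hermitian positive definite square root and $\mathcal{N}^{-1/2}=(\mathcal{N}^{1/2})^{-1}$. Weighted norms: $\|\mathcal{X}\|_{\mathcal{M}}=\langle\mathcal{M}*_N\mathcal{X},\mathcal{X}\rangle^{1/2}$, $\|\mathcal{X}\|_{\mathcal{N}}=\langle\mathcal{N}*_N\mathcal{X},\mathcal{X}\rangle^{1/2}$, $\|\mathcal{A}\|_{\mathcal{M}\mathcal{N}}=\sup\{\|\mathcal{A}*_N\mathcal{X}\|_{\mathcal{M}}:\|\mathcal{X}\|_{\mathcal{N}}=1\}$, $\|\mathcal{B}\|_{\mathcal{N}\mathcal{M}}=\sup\{\|\mathcal{B}*_N\mathcal{X}\|_{\mathcal{N}}:\|\mathcal{X}\|_{\mathcal{M}}=1\}$. Numerical range $W(\mathcal{A})=\{\langle\mathcal{A}*_N\mathcal{X},\mathcal{X}\rangle:\|\mathcal{X}\|=1\}$ and numerical radius $w(\mathcal{A})=\max\{|z|:z\in W(\mathcal{A})\}$. Weighted Moore-Penrose inverse $\mathcal{A}^{\dagger}_{\mathcal{M},\mathcal{N}}$: the unique $\mathcal{X}$ with $\mathcal{A}*_N\mathcal{X}*_N\mathcal{A}=\mathcal{A}$, $\mathcal{X}*_N\mathcal{A}*_N\mathcal{X}=\mathcal{X}$, $(\mathcal{M}*_N\mathcal{A}*_N\mathcal{X})^H=\mathcal{M}*_N\mathcal{A}*_N\mathcal{X}$, $(\mathcal{N}*_N\mathcal{X}*_N\mathcal{A})^H=\mathcal{N}*_N\mathcal{X}*_N\mathcal{A}$;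 $\tilde{\mathcal{A}}^{\dagger}$ is the Moore-Penrose inverse (identity weights). *)

theory Defs
  imports Complex_Main
begin

text \<open>Multi-indices (i_1,...,i_N) with 0 <= i_k < I_k, encoded as functions nat => nat
  that vanish from position N on.\<close>
definition idx :: "(nat \<Rightarrow> nat) \<Rightarrow> nat \<Rightarrow> (nat \<Rightarrow> nat) set" where
  "idx I N = {f. (\<forall>k<N. f k < I k) \<and> (\<forall>k\<ge>N. f k = 0)}"

type_synonym mindex = "nat \<Rightarrow> nat"
type_synonym tensor = "mindex \<Rightarrow> mindex \<Rightarrow> complex"
type_synonym vtensor = "mindex \<Rightarrow> complex"

text \<open>In all definitions, D is the multi-index set I_1 x ... x I_N; entries outside D are 0.\<close>
definition is_tensor :: "mindex set \<Rightarrow> tensor \<Rightarrow> bool" where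
  "is_tensor D A \<longleftrightarrow> (\<forall>i j. (i \<notin> D \<or> j \<notin> D) \<longrightarrow> A i j = 0)"

definition is_vtensor :: "mindex set \<Rightarrow> vtensor \<Rightarrow> bool" where
  "is_vtensor D X \<longleftrightarrow> (\<forall>i. i \<notin> D \<longrightarrow> X i = 0)"

definition zero_tensor :: tensor where "zero_tensor = (\<lambda>i j. 0)"

definition id_tensor :: "mindex set \<Rightarrow> tensor" where
  "id_tensor D = (\<lambda>i j. if i \<in> D \<and> j \<in> D \<and> i = j then 1 else 0)"

definition ein :: "mindex set \<Rightarrow> tensor \<Rightarrow> tensor \<Rightarrow> tensor" where
  "ein D A B = (\<lambda>i j. if i \<in> D \<and> j \<in> D then (\<Sum>k\<in>D. A i k * B k j) else 0)"

definition einv :: "mindex set \<Rightarrow> tensor \<Rightarrow> vtensor \<Rightarrow> vtensor" where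
  "einv D A X = (\<lambda>i. if i \<in> D then (\<Sum>k\<in>D. A i k * X k) else 0)"

definition ctrans :: "tensor \<Rightarrow> tensor" where
  "ctrans A = (\<lambda>i j. cnj (A j i))"

definition tinner :: "mindex set \<Rightarrow> vtensor \<Rightarrow> vtensor \<Rightarrow> complex" where
  "tinner D X Y = (\<Sum>i\<in>D. cnj (Y i) * X i)"

definition tnorm :: "mindex set \<Rightarrow> vtensor \<Rightarrow> real" where
  "tnorm D X = sqrt (Re (tinner D X X))"

definition hpd :: "mindex set \<Rightarrow> tensor \<Rightarrow> bool" where
  "hpd D M \<longleftrightarrow> is_tensor D M \<and> ctrans M = M \<and>
     (\<forall>X. is_vtensor D X \<and> X \<noteq> (\<lambda>i. 0) \<longrightarrow>
        tinner D (einv D M X) X \<in> \<real> \<and> 0 < Re (tinner D (einv D M X) X))"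

definition tinv :: "mindex set \<Rightarrow> tensor \<Rightarrow> tensor" where
  "tinv D A = (THE B. is_tensor D B \<and> ein D A B = id_tensor D \<and> ein D B A = id_tensor D)"

definition tsqrt :: "mindex set \<Rightarrow> tensor \<Rightarrow> tensor" where
  "tsqrt D M = (THE S. hpd D S \<and> ein D S S = M)"

definition wnorm :: "mindex set \<Rightarrow> tensor \<Rightarrow> vtensor \<Rightarrow> real" where
  "wnorm D M X = sqrt (Re (tinner D (einv D M X) X))"

definition wopnorm :: "mindex set \<Rightarrow> tensor \<Rightarrow> tensor \<Rightarrow> tensor \<Rightarrow> real" where
  "wopnorm D M N A = Sup {wnorm D M (einv D A X) | X. is_vtensor D X \<and> wnorm D N X = 1}"

definition numrad :: "mindex set \<Rightarrow> tensor \<Rightarrow> real" where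
  "numrad D A = Sup {cmod (tinner D (einv D A X) X) | X. is_vtensor D X \<and> tnorm D X = 1}"

definition wmp :: "mindex set \<Rightarrow> tensor \<Rightarrow> tensor \<Rightarrow> tensor \<Rightarrow> tensor" where
  "wmp D M N A = (THE X. is_tensor D X \<and>
      ein D (ein D A X) A = A \<and> ein D (ein D X A) X = X \<and>
      ctrans (ein D M (ein D A X)) = ein D M (ein D A X) \<and>
      ctrans (ein D N (ein D X A)) = ein D N (ein D X A))"

definition mpinv :: "mindex set \<Rightarrow> tensor \<Rightarrow> tensor" where
  "mpinv D A = wmp D (id_tensor D) (id_tensor D) A"

end

theory Submission
  imports Defs "Jordan_Normal_Form.Jordan_Normal_Form" "HOL-Computational_Algebra.Fundamental_Theorem_Algebra"
begin

lemma is_tensor_ein[simp]: "is_tensor D (ein D A B)"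
  by (simp add: is_tensor_def ein_def)

lemma is_tensor_id[simp]: "is_tensor D (id_tensor D)"
  by (simp add: is_tensor_def id_tensor_def)

lemma is_tensor_ctrans[simp]: "is_tensor D (ctrans A) = is_tensor D A"
  by (auto simp add: is_tensor_def ctrans_def)

lemma ctrans_ctrans[simp]: "ctrans (ctrans A) = A"
  by (simp add: ctrans_def)

lemma ctrans_id[simp]: "ctrans (id_tensor D) = id_tensor D"
  by (auto simp add: ctrans_def id_tensor_def fun_eq_iff)

lemma ein_assoc: "ein D (ein D A B) C = ein D A (ein D B C)"
proof -
  have "(\<Sum>k\<in>D. (\<Sum>l\<in>D. A i l * B l k) * C k j) = (\<Sum>l\<in>D. A i l * (\<Sum>k\<in>D. B l k * C k j))" for i j
    by (simp add: sum_distrib_left sum_distrib_right mult.assoc) (rule sum.swap)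
  then show ?thesis by (auto simp: ein_def fun_eq_iff cong: sum.cong)
qed

lemma ctrans_ein: "ctrans (ein D A B) = ein D (ctrans B) (ctrans A)"
  by (auto simp: ctrans_def ein_def fun_eq_iff mult.commute)

lemma ein_id_left: "finite D \<Longrightarrow> is_tensor D A \<Longrightarrow> ein D (id_tensor D) A = A"
  unfolding ein_def id_tensor_def is_tensor_def
  by (intro ext) (auto simp: if_distrib[of "\<lambda>x. x * _"] cong: if_cong)

lemma ein_id_right: "finite D \<Longrightarrow> is_tensor D A \<Longrightarrow> ein D A (id_tensor D) = A"
  unfolding ein_def id_tensor_def is_tensor_def
  by (intro ext) (auto simp: if_distrib[of "\<lambda>x. _ * x"] cong: if_cong)

lemma is_vtensor_einv[simp]: "is_vtensor D (einv D A X)"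
  by (simp add: is_vtensor_def einv_def)

lemma einv_ein: "einv D (ein D A B) X = einv D A (einv D B X)"
proof -
  have "(\<Sum>k\<in>D. (\<Sum>l\<in>D. A i l * B l k) * X k) = (\<Sum>l\<in>D. A i l * (\<Sum>k\<in>D. B l k * X k))" for i
    by (simp add: sum_distrib_left sum_distrib_right mult.assoc) (rule sum.swap)
  then show ?thesis by (auto simp: einv_def ein_def fun_eq_iff cong: sum.cong)
qed

lemma einv_id: "finite D \<Longrightarrow> is_vtensor D X \<Longrightarrow> einv D (id_tensor D) X = X"
  unfolding einv_def id_tensor_def is_vtensor_def
  by (intro ext) (auto simp: if_distrib[of "\<lambda>x. x * _"] cong: if_cong)

lemma tinner_adj: "tinner D (einv D A X) Y = tinner D X (einv D (ctrans A) Y)"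
proof -
  have "(\<Sum>i\<in>D. cnj (Y i) * (\<Sum>k\<in>D. A i k * X k)) = (\<Sum>k\<in>D. cnj (\<Sum>i\<in>D. cnj (A i k) * Y i) * X k)"
    by (simp add: sum_distrib_left sum_distrib_right mult_ac) (rule sum.swap)
  then show ?thesis by (simp add: tinner_def einv_def ctrans_def)
qed

lemma tinner_cnj: "cnj (tinner D X Y) = tinner D Y X"
  by (simp add: tinner_def mult.commute)

lemma tinner_self: "tinner D X X = of_real (\<Sum>i\<in>D. (cmod (X i))^2)"
  by (simp add: tinner_def complex_norm_square mult.commute del: of_real_power)

lemma tinner_self_Re: "Re (tinner D X X) = (\<Sum>i\<in>D. (cmod (X i))^2)"
  by (simp add: tinner_self)

lemma tinner_self_ge0: "0 \<le> Re (tinner D X X)"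
  unfolding tinner_self_Re by (rule sum_nonneg) simp

lemma tinner_self_zero: "finite D \<Longrightarrow> is_vtensor D X \<Longrightarrow> Re (tinner D X X) = 0 \<longleftrightarrow> X = (\<lambda>i. 0)"
  by (auto simp: tinner_self_Re sum_nonneg_eq_0_iff is_vtensor_def fun_eq_iff)

lemma tnorm_sq: "(tnorm D X)^2 = Re (tinner D X X)"
  by (simp add: tnorm_def real_sqrt_pow2[OF tinner_self_ge0])

lemma tnorm_ge0: "0 \<le> tnorm D X" by (simp add: tnorm_def tinner_self_ge0)

lemma eigvec_exists:
  assumes fin: "finite D" and ne: "D \<noteq> {}"
  shows "\<exists>e x. is_vtensor D x \<and> (\<exists>d\<in>D. x d \<noteq> 0) \<and> einv D H x = (\<lambda>i. e * x i)"
proof -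
  define n where "n = card D"
  obtain h where h: "bij_betw h {0..<n} D" using ex_bij_betw_nat_finite[OF fin] n_def by blast
  have n0: "n > 0" using fin ne n_def by (simp add: card_gt_0_iff)
  define A :: "complex mat" where "A = mat n n (\<lambda>(i,j). H (h i) (h j))"
  have A: "A \<in> carrier_mat n n" by (simp add: A_def)
  have "degree (char_poly A) = n" using degree_monic_char_poly[OF A] by simp
  hence "\<not> constant (poly (char_poly A))" using n0 by (simp add: constant_degree)
  then obtain e where "poly (char_poly A) e = 0" using fundamental_theorem_of_algebra by blast
  hence "eigenvalue A e" using eigenvalue_root_char_poly[OF A] by simp
  then obtain v where v: "v \<in> carrier_vec n" "v \<noteq> 0\<^sub>v n" "A *\<^sub>v v = e \<cdot>\<^sub>v v"
    unfolding eigenvalue_def eigenvector_def using A by auto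
  define g where "g = inv_into {0..<n} h"
  have g: "\<And>m. m \<in> D \<Longrightarrow> g m < n \<and> h (g m) = m"
    using h unfolding g_def by (metis atLeastLessThan_iff bij_betw_def bij_betw_inv_into_right inv_into_into)
  have gh: "\<And>j. j < n \<Longrightarrow> g (h j) = j"
    using h unfolding g_def by (simp add: bij_betw_inv_into_left)
  define x where "x = (\<lambda>m. if m \<in> D then v $ (g m) else 0)"
  have "is_vtensor D x" by (simp add: is_vtensor_def x_def)
  moreover have "\<exists>d\<in>D. x d \<noteq> 0"
  proof -
    obtain j where j: "j < n" "v $ j \<noteq> 0" using v(1,2) by (metis carrier_vecD eq_vecI index_zero_vec(1,2))
    have "h j \<in> D" using h j(1) by (auto simp: bij_betw_def)
    thus ?thesis using j gh by (auto simp: x_def intro!: bexI[of _ "h j"])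
  qed
  moreover have "einv D H x = (\<lambda>i. e * x i)"
  proof
    fix m
    show "einv D H x m = e * x m"
    proof (cases "m \<in> D")
      case False thus ?thesis by (simp add: einv_def x_def)
    next
      case True
      have "einv D H x m = (\<Sum>k\<in>D. H m k * x k)" using True by (simp add: einv_def)
      also have "\<dots> = (\<Sum>j\<in>{0..<n}. H m (h j) * x (h j))"
        by (rule sum.reindex_bij_betw[OF h, symmetric])
      also have "\<dots> = (\<Sum>j\<in>{0..<n}. A $$ (g m, j) * v $ j)"
        using g[OF True] gh h by (intro sum.cong) (auto simp: A_def x_def bij_betw_def)
      also have "\<dots> = (A *\<^sub>v v) $ (g m)"
        using g[OF True] v(1) A by (simp add: mult_mat_vec_def scalar_prod_def row_def)
      also have "\<dots> = e * x m" using v(3) g[OF True] v(1) True by (simp add: x_def)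
      finally show ?thesis .
    qed
  qed
  ultimately show ?thesis by blast
qed

definition tunitary :: "mindex set \<Rightarrow> tensor \<Rightarrow> bool" where
  "tunitary D U \<longleftrightarrow> is_tensor D U \<and> ein D (ctrans U) U = id_tensor D \<and> ein D U (ctrans U) = id_tensor D"

definition tdiag :: "mindex set \<Rightarrow> (mindex \<Rightarrow> real) \<Rightarrow> tensor" where
  "tdiag D l = (\<lambda>i j. if i \<in> D \<and> i = j then complex_of_real (l i) else 0)"

definition spec :: "mindex set \<Rightarrow> tensor \<Rightarrow> (mindex \<Rightarrow> real) \<Rightarrow> tensor" where
  "spec D U l = ein D (ein D U (tdiag D l)) (ctrans U)"

lemma tensor_eqI: "is_tensor D A \<Longrightarrow> is_tensor D B \<Longrightarrow> (\<And>i j. i \<in> D \<Longrightarrow> j \<in> D \<Longrightarrow> A i j = B i j) \<Longrightarrow> A = B"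
  unfolding is_tensor_def by (intro ext) metis

lemma is_tensor_tdiag[simp]: "is_tensor D (tdiag D l)"
  by (simp add: is_tensor_def tdiag_def)

lemma spec_entry: "finite D \<Longrightarrow> spec D U l i j =
   (if i \<in> D \<and> j \<in> D then (\<Sum>k\<in>D. U i k * of_real (l k) * cnj (U j k)) else 0)"
proof -
  assume fin: "finite D"
  have "(\<Sum>k\<in>D. (\<Sum>m\<in>D. U i m * (if m \<in> D \<and> m = k then complex_of_real (l m) else 0)) * cnj (U j k))
      = (\<Sum>k\<in>D. U i k * of_real (l k) * cnj (U j k))"
    using fin by (intro sum.cong refl) (simp add: if_distrib[of "\<lambda>x. _ * x"] cong: if_cong)
  thus ?thesis by (simp add: spec_def ein_def tdiag_def ctrans_def)
qed

lemma is_tensor_spec[simp]: "is_tensor D (spec D U l)" by (simp add: spec_def)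

lemma ein_ctrans_entry: "i \<in> D \<Longrightarrow> j \<in> D \<Longrightarrow> ein D (ctrans A) B i j = (\<Sum>k\<in>D. cnj (A k i) * B k j)"
  by (simp add: ein_def ctrans_def)

lemma einv_scale: "einv D H (\<lambda>i. c * x i) = (\<lambda>i. c * einv D H x i)"
  by (auto simp: einv_def sum_distrib_left mult_ac)

lemma tinner_scale_left: "tinner D (\<lambda>i. c * x i) y = c * tinner D x y"
  by (simp add: tinner_def sum_distrib_left mult_ac)

lemma tinner_scale_right: "tinner D x (\<lambda>i. c * y i) = cnj c * tinner D x y"
  by (simp add: tinner_def sum_distrib_left mult_ac)

definition delta :: "mindex \<Rightarrow> vtensor" where "delta d = (\<lambda>k. if k = d then 1 else 0)"

lemma einv_delta: "finite D \<Longrightarrow> d \<in> D \<Longrightarrow> einv D A (delta d) = (\<lambda>i. if i \<in> D then A i d else 0)"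
  by (auto simp: einv_def delta_def if_distrib[of "\<lambda>x. _ * x"] cong: if_cong)

lemma unit_eigvec:
  assumes fin: "finite D" and ne: "D \<noteq> {}" and herm: "ctrans H = H"
  shows "\<exists>e x. is_vtensor D x \<and> tinner D x x = 1 \<and> einv D H x = (\<lambda>i. complex_of_real e * x i)"
proof -
  obtain e x0 where x0: "is_vtensor D x0" "\<exists>d\<in>D. x0 d \<noteq> 0" "einv D H x0 = (\<lambda>i. e * x0 i)"
    using eigvec_exists[OF fin ne] by blast
  have nz: "x0 \<noteq> (\<lambda>i. 0)" using x0(2) by auto
  define r where "r = Re (tinner D x0 x0)"
  have r: "r > 0" using tinner_self_zero[OF fin x0(1)] nz tinner_self_ge0[of D x0] unfolding r_def by linarith
  define x where "x = (\<lambda>i. complex_of_real (1 / sqrt r) * x0 i)"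
  have "tinner D x x = of_real (1/sqrt r) * of_real (1/sqrt r) * tinner D x0 x0"
    unfolding x_def tinner_scale_left tinner_scale_right by simp
  also have "tinner D x0 x0 = of_real r" unfolding r_def tinner_self by simp
  finally have xx: "tinner D x x = 1" using r
    by (simp flip: of_real_mult)
  have vx: "is_vtensor D x" using x0(1) by (simp add: is_vtensor_def x_def)
  have ex: "einv D H x = (\<lambda>i. e * x i)" unfolding x_def einv_scale x0(3) by (simp add: mult_ac)
  have "tinner D (einv D H x) x = e" unfolding ex tinner_scale_left xx by simp
  moreover have "tinner D (einv D H x) x = tinner D x (einv D H x)" using tinner_adj[of D H x x] herm by simp
  moreover have "tinner D x (einv D H x) = cnj e" unfolding ex tinner_scale_right xx by simp
  ultimately have "e = cnj e" by simp
  hence "Im e = 0" using complex_eq_iff[of e "cnj e"] by simp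
  hence "e = complex_of_real (Re e)" by (simp add: complex_eq_iff)
  then obtain er where "e = complex_of_real er" by blast
  thus ?thesis using vx xx ex by blast
qed

lemma tinner_self_real: "tinner D u u = complex_of_real (Re (tinner D u u))"
  by (simp add: tinner_self)

lemma householder:
  assumes fin: "finite D" and d0: "d0 \<in> D" and vx: "is_vtensor D x" and xx: "tinner D x x = 1"
  shows "\<exists>W c. tunitary D W \<and> (\<forall>i. W i d0 = c * x i)"
proof -
  define a where "a = x d0"
  define c where "c = (if a = 0 then 1 else cnj a / complex_of_real (cmod a))"
  define x' where "x' = (\<lambda>i. c * x i)"
  have x'd0: "x' d0 = complex_of_real (cmod a)"
  proof (cases "a = 0")
    case True thus ?thesis by (simp add: x'_def c_def a_def)
  next
    case False
    have "cnj a * a = complex_of_real ((cmod a)^2)" by (metis complex_norm_square mult.commute)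
    thus ?thesis using False by (simp add: x'_def c_def a_def[symmetric] power2_eq_square field_simps)
  qed
  have vx': "is_vtensor D x'" using vx by (simp add: is_vtensor_def x'_def)
  define u where "u = (\<lambda>i. delta d0 i - x' i)"
  have vu: "is_vtensor D u" using vx' d0 by (auto simp: is_vtensor_def u_def delta_def)
  define s where "s = Re (tinner D u u)"
  show ?thesis
  proof (cases "s = 0")
    case True
    hence "u = (\<lambda>i. 0)" using tinner_self_zero[OF fin vu] s_def by simp
    hence x'eq: "x' i = delta d0 i" for i unfolding u_def by (metis eq_iff_diff_eq_0)
    have "tunitary D (id_tensor D)" by (simp add: tunitary_def ein_id_left[OF fin])
    moreover have "id_tensor D i d0 = c * x i" for i
      using x'eq[of i] d0 by (simp add: id_tensor_def delta_def x'_def)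
    ultimately show ?thesis by blast
  next
    case False
    define b where "b = complex_of_real (2 / s)"
    define W where "W = (\<lambda>i j. if i \<in> D \<and> j \<in> D then delta i j - b * u i * cnj (u j) else 0)"
    have tW: "is_tensor D W" by (simp add: is_tensor_def W_def)
    have hW: "ctrans W = W"
      by (intro ext) (auto simp: ctrans_def W_def b_def delta_def)
    have uu: "tinner D u u = complex_of_real s" unfolding s_def by (rule tinner_self_real)
    have suu: "(\<Sum>k\<in>D. cnj (u k) * u k) = complex_of_real s" using uu by (simp add: tinner_def)
    have WW: "ein D W W = id_tensor D"
    proof (rule tensor_eqI[OF is_tensor_ein is_tensor_id])
      fix i j assume i: "i \<in> D" and j: "j \<in> D"
      have "ein D W W i j = (\<Sum>k\<in>D. (delta i k - b * u i * cnj (u k)) * (delta k j - b * u k * cnj (u j)))"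
        using i j by (simp add: ein_def W_def)
      also have "\<dots> = (\<Sum>k\<in>D. delta i k * delta k j) - (\<Sum>k\<in>D. delta i k * (b * u k * cnj (u j)))
          - (\<Sum>k\<in>D. (b * u i * cnj (u k)) * delta k j) + b * b * u i * cnj (u j) * (\<Sum>k\<in>D. cnj (u k) * u k)"
        by (simp add: algebra_simps sum.distrib sum_subtractf sum_distrib_left)
      also have "\<dots> = delta i j - b * u i * cnj (u j) - b * u i * cnj (u j) + b * b * u i * cnj (u j) * complex_of_real s"
        using fin i j unfolding suu by (simp add: delta_def if_distrib[of "\<lambda>x. x * _"] if_distrib[of "\<lambda>x. _ * x"] cong: if_cong)
      also have "\<dots> = delta i j"
        using False by (simp add: b_def field_simps)
      finally show "ein D W W i j = id_tensor D i j" using i j by (simp add: id_tensor_def delta_def)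
    qed
    have "tunitary D W" using tW hW WW by (simp add: tunitary_def)
    moreover have "W i d0 = c * x i" for i
    proof (cases "i \<in> D")
      case False thus ?thesis using vx by (simp add: W_def is_vtensor_def)
    next
      case True
      have "tinner D x' x' = c * cnj c" unfolding x'_def tinner_scale_left tinner_scale_right xx by simp
      have "tinner D u u = 2 - 2 * complex_of_real (cmod a)"
      proof -
        have "tinner D u u = (\<Sum>k\<in>D. cnj (delta d0 k) * delta d0 k) - (\<Sum>k\<in>D. cnj (delta d0 k) * x' k)
           - (\<Sum>k\<in>D. cnj (x' k) * delta d0 k) + tinner D x' x'"
          by (simp add: tinner_def u_def algebra_simps sum.distrib sum_subtractf)
        also have "\<dots> = 1 - x' d0 - cnj (x' d0) + tinner D x' x'"
          using fin d0 by (simp add: delta_def if_distrib[of cnj] if_distrib[of "\<lambda>x. x * _"] if_distrib[of "\<lambda>x. _ * x"] cong: if_cong)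
        also have "tinner D x' x' = 1"
        proof -
          have "tinner D x' x' = c * cnj c" unfolding x'_def tinner_scale_left tinner_scale_right xx by simp
          also have "\<dots> = 1"
          proof (cases "a = 0")
            case False
            have "cnj a * a = complex_of_real ((cmod a)^2)" by (metis complex_norm_square mult.commute)
            thus ?thesis using False by (simp add: c_def power2_eq_square field_simps)
          qed (simp add: c_def)
          finally show ?thesis .
        qed
        finally show ?thesis unfolding x'd0 by simp
      qed
      hence s2: "complex_of_real s = 2 - 2 * complex_of_real (cmod a)" using uu by simp
      have ud0: "cnj (u d0) = 1 - complex_of_real (cmod a)" by (simp add: u_def delta_def x'd0)
      have "b * cnj (u d0) = 1"
      proof -
        have "complex_of_real s \<noteq> 0" using False by simp
        thus ?thesis unfolding b_def ud0 using s2 False by (simp add: field_simps of_real_divide)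
      qed
      hence "W i d0 = delta i d0 - u i" using True d0 by (simp add: W_def mult_ac)
      also have "\<dots> = x' i" by (simp add: u_def delta_def)
      finally show ?thesis by (simp add: x'_def)
    qed
    ultimately show ?thesis by blast
  qed
qed

lemma unitary_cancel1: "finite D \<Longrightarrow> tunitary D W \<Longrightarrow> is_tensor D X \<Longrightarrow> ein D W (ein D (ctrans W) X) = X"
  by (simp add: tunitary_def ein_assoc[symmetric] ein_id_left)

lemma unitary_cancel2: "finite D \<Longrightarrow> tunitary D W \<Longrightarrow> is_tensor D X \<Longrightarrow> ein D (ctrans W) (ein D W X) = X"
  by (simp add: tunitary_def ein_assoc[symmetric] ein_id_left)

lemma unitary_mult: "finite D \<Longrightarrow> tunitary D W \<Longrightarrow> tunitary D V \<Longrightarrow> tunitary D (ein D W V)"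
proof -
  assume a: "finite D" "tunitary D W" "tunitary D V"
  have tV: "is_tensor D V" "is_tensor D (ctrans W)" using a by (auto simp: tunitary_def)
  have "ein D (ctrans (ein D W V)) (ein D W V) = id_tensor D"
    unfolding ctrans_ein ein_assoc using a
    using unitary_cancel2[OF a(1,2) tV(1)] a(3) by (simp add: tunitary_def)
  moreover have "ein D (ein D W V) (ctrans (ein D W V)) = id_tensor D"
    unfolding ctrans_ein ein_assoc using a
    using unitary_cancel1[OF a(1,3) tV(2)] a(2) by (simp add: tunitary_def)
  ultimately show ?thesis by (simp add: tunitary_def)
qed

lemma spectral_empty: "is_tensor {} H \<Longrightarrow> tunitary {} (id_tensor {}) \<and> H = spec {} (id_tensor {}) l"
  by (auto simp: tunitary_def spec_def ein_def id_tensor_def is_tensor_def)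

lemma spectral:
  assumes "finite D"
  shows "is_tensor D H \<Longrightarrow> ctrans H = H \<Longrightarrow> \<exists>U l. tunitary D U \<and> H = spec D U l"
  using assms
proof (induct D arbitrary: H rule: finite_induct)
  case empty thus ?case using spectral_empty by blast
next
  case (insert d0 F H)
  define D where "D = insert d0 F"
  have fin: "finite D" using insert by (simp add: D_def)
  have d0: "d0 \<in> D" by (simp add: D_def)
  have Fd0: "\<And>k. k \<in> F \<Longrightarrow> (k = d0) = False" "\<And>k. k \<in> F \<Longrightarrow> (d0 = k) = False" using insert by auto
  have tH: "is_tensor D H" and hH: "ctrans H = H" using insert by (auto simp: D_def)
  obtain e x where x: "is_vtensor D x" "tinner D x x = 1" "einv D H x = (\<lambda>i. complex_of_real e * x i)"
    using unit_eigvec[OF fin _ hH] d0 by blast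
  obtain W c where W: "tunitary D W" "\<And>i. W i d0 = c * x i"
    using householder[OF fin d0 x(1,2)] by blast
  define x' where "x' = (\<lambda>i. c * x i)"
  have Hx': "einv D H x' = (\<lambda>i. complex_of_real e * x' i)"
    unfolding x'_def einv_scale x(3) by (simp add: mult_ac)
  have vd: "is_vtensor D (delta d0)" using d0 by (auto simp: is_vtensor_def delta_def)
  have Wcol: "einv D W (delta d0) = x'"
    using x(1) by (auto simp: einv_delta[OF fin d0] W(2) x'_def is_vtensor_def)
  define K where "K = ein D (ein D (ctrans W) H) W"
  have tK: "is_tensor D K" by (simp add: K_def)
  have hK: "ctrans K = K" unfolding K_def ctrans_ein hH by (simp add: ein_assoc)
  have "einv D K (delta d0) = einv D (ctrans W) (einv D H x')"
    unfolding K_def einv_ein Wcol ..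
  also have "\<dots> = (\<lambda>i. complex_of_real e * einv D (ctrans W) x' i)" unfolding Hx' einv_scale ..
  also have "einv D (ctrans W) x' = delta d0"
    unfolding Wcol[symmetric] einv_ein[symmetric] using W(1) einv_id[OF fin vd] by (simp add: tunitary_def)
  finally have Kcol: "einv D K (delta d0) = (\<lambda>i. complex_of_real e * delta d0 i)" .
  have Kd0: "\<And>i. i \<in> D \<Longrightarrow> K i d0 = complex_of_real e * delta d0 i"
    using Kcol unfolding einv_delta[OF fin d0] by (metis (mono_tags))
  have Kd0': "\<And>j. j \<in> D \<Longrightarrow> K d0 j = complex_of_real e * delta d0 j"
  proof -
    fix j assume j: "j \<in> D"
    have "K d0 j = cnj (K j d0)" using fun_cong[OF fun_cong[OF hK, of d0], of j] by (simp add: ctrans_def)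
    thus "K d0 j = complex_of_real e * delta d0 j" using Kd0[OF j] by (simp add: delta_def)
  qed
  define K' where "K' = (\<lambda>i j. if i \<in> F \<and> j \<in> F then K i j else 0)"
  have tK': "is_tensor F K'" by (simp add: is_tensor_def K'_def)
  have hK': "ctrans K' = K'"
  proof (intro ext)
    fix i j show "ctrans K' i j = K' i j"
      using fun_cong[OF fun_cong[OF hK, of i], of j] by (simp add: ctrans_def K'_def)
  qed
  obtain U' l' where U': "tunitary F U'" "K' = spec F U' l'" using insert(3)[OF tK' hK'] by blast
  have tU': "is_tensor F U'" using U'(1) by (simp add: tunitary_def)
  define U'' where "U'' = (\<lambda>i j. if i = d0 then (if j = d0 then 1 else 0) else if j = d0 then 0 else U' i j)"
  define l'' where "l'' = l'(d0 := e)"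
  have tU'': "is_tensor D U''" using tU' insert(2) by (auto simp: is_tensor_def U''_def D_def)
  have U''F: "\<And>i j. i \<in> F \<Longrightarrow> j \<in> F \<Longrightarrow> U'' i j = U' i j" "\<And>i. i \<in> F \<Longrightarrow> U'' i d0 = 0"
     "\<And>i. i \<in> F \<Longrightarrow> U'' d0 i = 0" "U'' d0 d0 = 1"
    by (auto simp: U''_def Fd0)
  have U'1: "\<And>i j. i \<in> F \<Longrightarrow> j \<in> F \<Longrightarrow> (\<Sum>k\<in>F. cnj (U' k i) * U' k j) = (if i = j then 1 else 0)"
  proof -
    fix i j assume i: "i \<in> F" and j: "j \<in> F"
    have "ein F (ctrans U') U' i j = (\<Sum>k\<in>F. cnj (U' k i) * U' k j)" using i j by (simp add: ein_def ctrans_def)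
    thus "?thesis i j" using U'(1) i j unfolding tunitary_def by (simp add: id_tensor_def)
  qed
  have U'2: "\<And>i j. i \<in> F \<Longrightarrow> j \<in> F \<Longrightarrow> (\<Sum>k\<in>F. U' i k * cnj (U' j k)) = (if i = j then 1 else 0)"
  proof -
    fix i j assume i: "i \<in> F" and j: "j \<in> F"
    have "ein F U' (ctrans U') i j = (\<Sum>k\<in>F. U' i k * cnj (U' j k))" using i j by (simp add: ein_def ctrans_def)
    thus "?thesis i j" using U'(1) i j unfolding tunitary_def by (simp add: id_tensor_def)
  qed
  have sumD: "\<And>f. (\<Sum>k\<in>D. f k) = f d0 + (\<Sum>k\<in>F. f k)" using insert by (simp add: D_def)
  have uU'': "tunitary D U''"
    unfolding tunitary_def
  proof (intro conjI tU'')
    show "ein D (ctrans U'') U'' = id_tensor D"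
    proof (rule tensor_eqI[OF is_tensor_ein is_tensor_id])
      fix i j assume i: "i \<in> D" and j: "j \<in> D"
      have "ein D (ctrans U'') U'' i j = cnj (U'' d0 i) * U'' d0 j + (\<Sum>k\<in>F. cnj (U'' k i) * U'' k j)"
        using i j by (simp add: ein_ctrans_entry sumD)
      also have "\<dots> = id_tensor D i j"
        using i j U'1 insert(2) unfolding D_def by (auto simp: U''F id_tensor_def Fd0 cong: sum.cong)
      finally show "ein D (ctrans U'') U'' i j = id_tensor D i j" .
    qed
    show "ein D U'' (ctrans U'') = id_tensor D"
    proof (rule tensor_eqI[OF is_tensor_ein is_tensor_id])
      fix i j assume i: "i \<in> D" and j: "j \<in> D"
      have "ein D U'' (ctrans U'') i j = U'' i d0 * cnj (U'' j d0) + (\<Sum>k\<in>F. U'' i k * cnj (U'' j k))"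
        using i j by (simp add: ein_def ctrans_def sumD)
      also have "\<dots> = id_tensor D i j"
        using i j U'2 insert(2) unfolding D_def by (auto simp: U''F id_tensor_def Fd0 cong: sum.cong)
      finally show "ein D U'' (ctrans U'') i j = id_tensor D i j" .
    qed
  qed
  have Kspec: "K = spec D U'' l''"
  proof (rule tensor_eqI[OF tK is_tensor_spec])
    fix i j assume i: "i \<in> D" and j: "j \<in> D"
    have "spec D U'' l'' i j = U'' i d0 * complex_of_real e * cnj (U'' j d0)
        + (\<Sum>k\<in>F. U'' i k * complex_of_real (l' k) * cnj (U'' j k))"
      using i j fin insert(2) by (simp add: spec_entry sumD l''_def Fd0 cong: sum.cong)
    also have "\<dots> = K i j"
    proof (cases "i = d0 \<or> j = d0")
      case True
      thus ?thesis using i j Kd0 Kd0' insert(2) by (auto simp: U''F delta_def D_def Fd0 cong: sum.cong)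
    next
      case False
      hence iF: "i \<in> F" and jF: "j \<in> F" using i j by (auto simp: D_def)
      have "K i j = K' i j" using iF jF by (simp add: K'_def)
      also have "\<dots> = (\<Sum>k\<in>F. U' i k * complex_of_real (l' k) * cnj (U' j k))"
        unfolding U'(2) using insert(1) iF jF by (simp add: spec_entry)
      finally show ?thesis using iF jF by (simp add: U''F cong: sum.cong)
    qed
    finally show "K i j = spec D U'' l'' i j" by simp
  qed
  define U where "U = ein D W U''"
  have uU: "tunitary D U" unfolding U_def by (rule unitary_mult[OF fin W(1) uU''])
  have "spec D U l'' = ein D W (ein D K (ctrans W))"
    unfolding Kspec spec_def U_def ctrans_ein by (simp add: ein_assoc)
  also have "\<dots> = H" unfolding K_def ein_assoc using W(1) tH fin
    by (simp add: unitary_cancel1) (simp add: ein_assoc[symmetric] tunitary_def ein_id_right)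
  finally show ?case using uU unfolding D_def by metis
qed

lemma ein_tdiag_left: "finite D \<Longrightarrow> ein D (tdiag D l) B = (\<lambda>i j. if i \<in> D \<and> j \<in> D then of_real (l i) * B i j else 0)"
  by (intro ext) (auto simp: ein_def tdiag_def if_distrib[of "\<lambda>x. x * _"] cong: if_cong)

lemma tdiag_mult: "finite D \<Longrightarrow> ein D (tdiag D l1) (ein D (tdiag D l2) Y) = ein D (tdiag D (\<lambda>k. l1 k * l2 k)) Y"
  by (intro ext) (auto simp: ein_tdiag_left mult.assoc)

lemma spec_mult: "finite D \<Longrightarrow> tunitary D U \<Longrightarrow> ein D (spec D U l1) (spec D U l2) = spec D U (\<lambda>k. l1 k * l2 k)"
proof -
  assume fin: "finite D" and u: "tunitary D U"
  have "ein D (ctrans U) (ein D U (ein D (tdiag D l2) (ctrans U))) = ein D (tdiag D l2) (ctrans U)"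
    by (rule unitary_cancel2[OF fin u]) simp
  thus ?thesis unfolding spec_def ein_assoc by (simp add: tdiag_mult[OF fin])
qed

lemma ctrans_tdiag[simp]: "ctrans (tdiag D l) = tdiag D l"
  by (intro ext) (auto simp: ctrans_def tdiag_def)

lemma ctrans_spec[simp]: "ctrans (spec D U l) = spec D U l"
  by (simp add: spec_def ctrans_ein ein_assoc)

lemma tdiag_one: "tdiag D (\<lambda>_. 1) = id_tensor D"
  by (intro ext) (auto simp: tdiag_def id_tensor_def)

lemma spec_one: "finite D \<Longrightarrow> tunitary D U \<Longrightarrow> spec D U (\<lambda>_. 1) = id_tensor D"
  unfolding spec_def tdiag_one by (simp add: tunitary_def ein_id_right)

lemma spec_cong: "(\<And>k. k \<in> D \<Longrightarrow> l1 k = l2 k) \<Longrightarrow> spec D U l1 = spec D U l2"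
proof -
  assume "\<And>k. k \<in> D \<Longrightarrow> l1 k = l2 k"
  hence "tdiag D l1 = tdiag D l2" by (intro ext) (auto simp: tdiag_def)
  thus ?thesis by (simp add: spec_def)
qed

lemma einv_tdiag: "finite D \<Longrightarrow> einv D (tdiag D l) y = (\<lambda>i. if i \<in> D then of_real (l i) * y i else 0)"
  by (intro ext) (auto simp: einv_def tdiag_def if_distrib[of "\<lambda>x. x * _"] cong: if_cong)

lemma spec_quad: "finite D \<Longrightarrow> tinner D (einv D (spec D U l) x) x
   = of_real (\<Sum>k\<in>D. l k * (cmod (einv D (ctrans U) x k))^2)"
proof -
  assume fin: "finite D"
  define y where "y = einv D (ctrans U) x"
  have "tinner D (einv D (spec D U l) x) x = tinner D (einv D U (einv D (tdiag D l) y)) x"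
    by (simp add: spec_def einv_ein y_def)
  also have "\<dots> = tinner D (einv D (tdiag D l) y) y" by (simp add: tinner_adj y_def)
  also have "\<dots> = (\<Sum>k\<in>D. cnj (y k) * (of_real (l k) * y k))"
    by (simp add: tinner_def einv_tdiag[OF fin])
  also have "\<dots> = (\<Sum>k\<in>D. of_real (l k * (cmod (y k))^2))"
    by (intro sum.cong refl) (simp add: complex_norm_square mult_ac del: of_real_power)
  finally show ?thesis by (simp add: y_def)
qed

lemma einv_zero[simp]: "einv D A (\<lambda>i. 0) = (\<lambda>i. 0)"
  by (intro ext) (simp add: einv_def)

lemma unitary_einv_inv: "finite D \<Longrightarrow> tunitary D U \<Longrightarrow> is_vtensor D x \<Longrightarrow> einv D U (einv D (ctrans U) x) = x"
  by (simp add: einv_ein[symmetric] tunitary_def einv_id)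

lemma unitary_einv_inv2: "finite D \<Longrightarrow> tunitary D U \<Longrightarrow> is_vtensor D x \<Longrightarrow> einv D (ctrans U) (einv D U x) = x"
  by (simp add: einv_ein[symmetric] tunitary_def einv_id)

lemma spec_pos_eig:
  assumes fin: "finite D" and u: "tunitary D U" and h: "hpd D (spec D U l)" and k: "k \<in> D"
  shows "l k > 0"
proof -
  define x where "x = einv D U (delta k)"
  have vd: "is_vtensor D (delta k)" using k by (auto simp: is_vtensor_def delta_def)
  have y: "einv D (ctrans U) x = delta k" unfolding x_def by (rule unitary_einv_inv2[OF fin u vd])
  have "x \<noteq> (\<lambda>i. 0)"
  proof
    assume "x = (\<lambda>i. 0)"
    hence "einv D (ctrans U) x = (\<lambda>i. 0)" by simp
    thus False using y by (metis delta_def zero_neq_one)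
  qed
  hence "0 < Re (tinner D (einv D (spec D U l) x) x)" using h by (simp add: hpd_def x_def)
  also have "tinner D (einv D (spec D U l) x) x = of_real (l k)"
    unfolding spec_quad[OF fin] y using fin k by (simp add: delta_def if_distrib[of cmod] if_distrib[of "\<lambda>x. x^2"] if_distrib[of "\<lambda>x. _ * x"] cong: if_cong)
  finally show ?thesis by simp
qed

lemma spec_hpd:
  assumes fin: "finite D" and u: "tunitary D U" and pos: "\<And>k. k \<in> D \<Longrightarrow> l k > 0"
  shows "hpd D (spec D U l)"
proof -
  have "tinner D (einv D (spec D U l) x) x \<in> \<real> \<and> 0 < Re (tinner D (einv D (spec D U l) x) x)"
    if x: "is_vtensor D x" "x \<noteq> (\<lambda>i. 0)" for x
  proof -
    define y where "y = einv D (ctrans U) x"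
    have "y \<noteq> (\<lambda>i. 0)"
    proof
      assume "y = (\<lambda>i. 0)"
      hence "einv D U y = (\<lambda>i. 0)" by simp
      thus False using unitary_einv_inv[OF fin u] x y_def by simp
    qed
    then obtain k where "y k \<noteq> 0" by auto
    hence kD: "k \<in> D" by (auto simp: y_def einv_def split: if_splits)
    have "0 < (\<Sum>k\<in>D. l k * (cmod (y k))^2)"
    proof (rule sum_pos2[OF fin kD])
      show "0 < l k * (cmod (y k))^2" using pos[OF kD] \<open>y k \<noteq> 0\<close> by simp
      show "\<And>i. i \<in> D \<Longrightarrow> 0 \<le> l i * (cmod (y i))^2" using pos by (simp add: less_imp_le)
    qed
    thus ?thesis unfolding spec_quad[OF fin] y_def[symmetric] by simp
  qed
  thus ?thesis by (simp add: hpd_def)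
qed

lemma inv_unique: "finite D \<Longrightarrow> is_tensor D B1 \<Longrightarrow> is_tensor D B2 \<Longrightarrow> ein D B1 A = id_tensor D \<Longrightarrow>
   ein D A B2 = id_tensor D \<Longrightarrow> B1 = B2"
  by (metis ein_assoc ein_id_left ein_id_right)

lemma hpd_tinner_ge0: assumes "is_vtensor D x" "hpd D S" shows "0 \<le> Re (tinner D (einv D S x) x) \<and> tinner D (einv D S x) x \<in> \<real>"
proof (cases "x = (\<lambda>i. 0)")
  case True thus ?thesis by (simp add: tinner_def)
next
  case False
  thus ?thesis using assms by (auto simp: hpd_def less_imp_le)
qed

lemma sqrt_unique:
  assumes fin: "finite D" and h1: "hpd D S1" and h2: "hpd D S2" and eq: "ein D S1 S1 = ein D S2 S2"
  shows "S1 = S2"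
proof -
  have t1: "is_tensor D S1" and c1: "ctrans S1 = S1" using h1 by (auto simp: hpd_def)
  have t2: "is_tensor D S2" and c2: "ctrans S2 = S2" using h2 by (auto simp: hpd_def)
  define X where "X = (\<lambda>i j. S1 i j - S2 i j)"
  have hX: "\<And>i j. cnj (X i j) = X j i"
    using fun_cong[OF fun_cong[OF c1]] fun_cong[OF fun_cong[OF c2]] by (simp add: X_def ctrans_def)
  have Z: "(\<Sum>k\<in>D. S1 l k * X k j) + (\<Sum>k\<in>D. X l k * S2 k j) = 0" if "l \<in> D" "j \<in> D" for l j
  proof -
    have "ein D S1 S1 l j = ein D S2 S2 l j" using eq by simp
    hence "(\<Sum>k\<in>D. S1 l k * S1 k j) = (\<Sum>k\<in>D. S2 l k * S2 k j)" using that by (simp add: ein_def)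
    thus ?thesis by (simp add: X_def algebra_simps sum_subtractf)
  qed
  define c where "c = (\<lambda>j l. if l \<in> D then X l j else 0)"
  have vc: "is_vtensor D (c j)" for j by (simp add: is_vtensor_def c_def)
  define q1 where "q1 = (\<lambda>j. tinner D (einv D S1 (c j)) (c j))"
  define q2 where "q2 = (\<lambda>j. tinner D (einv D S2 (c j)) (c j))"
  have q1e: "q1 j = (\<Sum>l\<in>D. X j l * (\<Sum>k\<in>D. S1 l k * X k j))" for j
    by (simp add: q1_def tinner_def einv_def c_def hX cong: sum.cong)
  have q2e: "q2 j = (\<Sum>l\<in>D. X j l * (\<Sum>k\<in>D. S2 l k * X k j))" for j
    by (simp add: q2_def tinner_def einv_def c_def hX cong: sum.cong)
  have "(\<Sum>j\<in>D. q2 j) = (\<Sum>j\<in>D. \<Sum>l\<in>D. \<Sum>k\<in>D. X j l * S2 l k * X k j)"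
    by (simp add: q2e sum_distrib_left mult.assoc)
  also have "\<dots> = (\<Sum>j\<in>D. \<Sum>k\<in>D. \<Sum>l\<in>D. X j l * S2 l k * X k j)" by (intro sum.cong refl sum.swap)
  also have "\<dots> = (\<Sum>k\<in>D. \<Sum>j\<in>D. \<Sum>l\<in>D. X j l * S2 l k * X k j)" by (rule sum.swap)
  also have "\<dots> = (\<Sum>j\<in>D. \<Sum>l\<in>D. X j l * (\<Sum>k\<in>D. X l k * S2 k j))"
    by (simp add: sum_distrib_left mult_ac)
  finally have q2s: "(\<Sum>j\<in>D. q2 j) = (\<Sum>j\<in>D. \<Sum>l\<in>D. X j l * (\<Sum>k\<in>D. X l k * S2 k j))" .
  have "(\<Sum>j\<in>D. q1 j + q2 j) = (\<Sum>j\<in>D. \<Sum>l\<in>D. X j l * ((\<Sum>k\<in>D. S1 l k * X k j) + (\<Sum>k\<in>D. X l k * S2 k j)))"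
    by (simp add: sum.distrib q2s q1e distrib_left)
  also have "\<dots> = 0" using Z by (simp cong: sum.cong)
  finally have s0: "(\<Sum>j\<in>D. Re (q1 j + q2 j)) = 0" by (metis Re_sum zero_complex.sel(1))
  have nn: "\<And>j. 0 \<le> Re (q1 j + q2 j)"
    using hpd_tinner_ge0[OF vc h1] hpd_tinner_ge0[OF vc h2] by (simp add: q1_def q2_def)
  have z: "\<And>j. j \<in> D \<Longrightarrow> Re (q1 j + q2 j) = 0" using s0 nn fin by (simp add: sum_nonneg_eq_0_iff)
  have "c j = (\<lambda>i. 0)" if j: "j \<in> D" for j
  proof (rule ccontr)
    assume "c j \<noteq> (\<lambda>i. 0)"
    hence "0 < Re (q1 j)" using h1 vc unfolding q1_def hpd_def by blast
    moreover have "0 \<le> Re (q2 j)" using hpd_tinner_ge0[OF vc h2] by (simp add: q2_def)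
    ultimately show False using z[OF j] by simp
  qed
  hence "\<And>i j. i \<in> D \<Longrightarrow> j \<in> D \<Longrightarrow> X i j = 0" by (metis c_def)
  thus ?thesis using t1 t2 by (intro tensor_eqI[OF t1 t2]) (simp add: X_def)
qed

lemma sqrt_facts:
  assumes fin: "finite D" and h: "hpd D M"
  shows "hpd D (tsqrt D M) \<and> ein D (tsqrt D M) (tsqrt D M) = M \<and> is_tensor D (tinv D (tsqrt D M))
     \<and> ein D (tsqrt D M) (tinv D (tsqrt D M)) = id_tensor D \<and> ein D (tinv D (tsqrt D M)) (tsqrt D M) = id_tensor D"
proof -
  have tM: "is_tensor D M" and cM: "ctrans M = M" using h by (auto simp: hpd_def)
  obtain U l where U: "tunitary D U" "M = spec D U l" using spectral[OF fin tM cM] by blast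
  have pos: "\<And>k. k \<in> D \<Longrightarrow> l k > 0" using spec_pos_eig[OF fin U(1)] h U(2) by blast
  define S where "S = spec D U (\<lambda>k. sqrt (l k))"
  define Si where "Si = spec D U (\<lambda>k. 1 / sqrt (l k))"
  have hS: "hpd D S" unfolding S_def by (rule spec_hpd[OF fin U(1)]) (simp add: pos)
  have SS: "ein D S S = M" unfolding S_def spec_mult[OF fin U(1)] U(2)
    by (rule spec_cong) (simp add: pos less_imp_le)
  have "tsqrt D M = S" unfolding tsqrt_def
  proof (rule the1_equality)
    show "\<exists>!S. hpd D S \<and> ein D S S = M" using hS SS sqrt_unique[OF fin] by metis
  qed (use hS SS in simp)
  moreover have SSi: "ein D S Si = id_tensor D" unfolding S_def Si_def spec_mult[OF fin U(1)]
    using spec_one[OF fin U(1)] spec_cong[of D "\<lambda>k. sqrt (l k) * (1 / sqrt (l k))" "\<lambda>_. 1" U] pos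
    by (metis (no_types, lifting) less_numeral_extra(3) nonzero_mult_div_cancel_left real_sqrt_eq_zero_cancel_iff times_divide_eq_right)
  moreover have SiS: "ein D Si S = id_tensor D" unfolding S_def Si_def spec_mult[OF fin U(1)]
    using spec_one[OF fin U(1)] spec_cong[of D "\<lambda>k. (1 / sqrt (l k)) * sqrt (l k)" "\<lambda>_. 1" U] pos
    by (metis (no_types, lifting) less_numeral_extra(3) divide_self_if real_sqrt_eq_zero_cancel_iff times_divide_eq_left mult_1)
  moreover have "tinv D S = Si" unfolding tinv_def
  proof (rule the1_equality)
    have tS: "is_tensor D S" by (simp add: S_def)
    show "\<exists>!B. is_tensor D B \<and> ein D S B = id_tensor D \<and> ein D B S = id_tensor D"
      using SSi SiS inv_unique[OF fin] by (metis is_tensor_spec Si_def)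
  qed (use SSi SiS Si_def in simp)
  ultimately show ?thesis using hS SS by (simp add: Si_def)
qed

definition pen :: "mindex set \<Rightarrow> tensor \<Rightarrow> tensor \<Rightarrow> tensor \<Rightarrow> tensor \<Rightarrow> bool" where
  "pen D M N A X \<longleftrightarrow> is_tensor D X \<and>
      ein D (ein D A X) A = A \<and> ein D (ein D X A) X = X \<and>
      ctrans (ein D M (ein D A X)) = ein D M (ein D A X) \<and>
      ctrans (ein D N (ein D X A)) = ein D N (ein D X A)"

lemma wmp_pen: "wmp D M N A = (THE X. pen D M N A X)"
  by (simp add: wmp_def pen_def)

lemma mpinv_pen: "mpinv D A = (THE X. pen D (id_tensor D) (id_tensor D) A X)"
  by (simp add: mpinv_def wmp_pen)

lemma pen_id: "finite D \<Longrightarrow> pen D (id_tensor D) (id_tensor D) A X \<longleftrightarrow> is_tensor D X \<and>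
      ein D (ein D A X) A = A \<and> ein D (ein D X A) X = X \<and>
      ctrans (ein D A X) = ein D A X \<and> ctrans (ein D X A) = ein D X A"
  by (simp add: pen_def ein_id_left)

lemma assoc_rule: "ein D P Q = R \<Longrightarrow> ein D P (ein D Q Z) = ein D R Z"
  by (metis ein_assoc)

lemma mp_unique:
  assumes fin: "finite D" and tA: "is_tensor D A"
    and X: "pen D (id_tensor D) (id_tensor D) A X" and Y: "pen D (id_tensor D) (id_tensor D) A Y"
  shows "X = Y"
proof -
  note X' = X[unfolded pen_id[OF fin]] and Y' = Y[unfolded pen_id[OF fin]]
  have "ctrans A = ctrans (ein D (ein D A Y) A)" using Y' by simp
  hence cA: "ctrans A = ein D (ctrans A) (ein D (ctrans Y) (ctrans A))" by (simp add: ctrans_ein ein_assoc)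
  have AX: "ein D A X = ein D (ein D A X) (ein D A Y)"
  proof -
    have "ein D A X = ein D (ctrans X) (ctrans A)" using X' by (metis ctrans_ein)
    also have "\<dots> = ein D (ein D (ctrans X) (ctrans A)) (ein D (ctrans Y) (ctrans A))"
      by (subst cA) (simp add: ein_assoc)
    also have "\<dots> = ein D (ein D A X) (ein D A Y)" using X' Y' by (metis ctrans_ein)
    finally show ?thesis .
  qed
  have "ctrans A = ctrans (ein D (ein D A X) A)" using X' by simp
  hence cA2: "ctrans A = ein D (ctrans A) (ein D (ctrans X) (ctrans A))" by (simp add: ctrans_ein ein_assoc)
  have YA: "ein D Y A = ein D (ein D X A) (ein D Y A)"
  proof -
    have "ein D Y A = ein D (ctrans A) (ctrans Y)" using Y' by (metis ctrans_ein)
    also have "\<dots> = ein D (ein D (ctrans A) (ctrans X)) (ein D (ctrans A) (ctrans Y))"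
      by (subst cA2) (simp add: ein_assoc)
    also have "\<dots> = ein D (ein D X A) (ein D Y A)" using X' Y' by (metis ctrans_ein)
    finally show ?thesis .
  qed
  have "X = ein D X (ein D A X)" using X' by (simp add: ein_assoc)
  also have "\<dots> = ein D X (ein D (ein D A X) (ein D A Y))" using AX by simp
  also have "\<dots> = ein D (ein D (ein D X A) X) (ein D A Y)" by (simp add: ein_assoc)
  also have "\<dots> = ein D X (ein D A Y)" using X' by simp
  finally have X1: "X = ein D X (ein D A Y)" .
  have "Y = ein D (ein D Y A) Y" using Y' by simp
  also have "\<dots> = ein D (ein D (ein D X A) (ein D Y A)) Y" using YA by simp
  also have "\<dots> = ein D X (ein D A (ein D (ein D Y A) Y))" by (simp add: ein_assoc)
  also have "\<dots> = ein D X (ein D A Y)" using Y' by simp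
  finally show ?thesis using X1 by simp
qed

definition tadd :: "tensor \<Rightarrow> tensor \<Rightarrow> tensor" where "tadd A B = (\<lambda>i j. A i j + B i j)"

lemma ein_tadd: "ein D A (tadd B C) = tadd (ein D A B) (ein D A C)"
  by (intro ext) (simp add: ein_def tadd_def distrib_left sum.distrib)

lemma spec_add: "finite D \<Longrightarrow> tadd (spec D U l1) (spec D U l2) = spec D U (\<lambda>k. l1 k + l2 k)"
  by (intro ext) (simp add: tadd_def spec_entry distrib_left distrib_right sum.distrib)

lemma spec_zero: "spec D U (\<lambda>_. 0) = (\<lambda>i j. 0)"
  by (intro ext) (simp add: spec_def ein_def tdiag_def if_distrib[of "\<lambda>x. _ * x"] cong: if_cong)

lemma gram_zero: assumes fin: "finite D" and tB: "is_tensor D B" and z: "ein D (ctrans B) B = (\<lambda>i j. 0)"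
  shows "B = (\<lambda>i j. 0)"
proof (rule tensor_eqI[OF tB])
  show "is_tensor D (\<lambda>i j. 0)" by (simp add: is_tensor_def)
  fix i j assume i: "i \<in> D" and j: "j \<in> D"
  have "(\<Sum>k\<in>D. cnj (B k j) * B k j) = 0" using fun_cong[OF fun_cong[OF z, of j], of j] j by (simp add: ein_ctrans_entry)
  hence "tinner D (\<lambda>k. B k j) (\<lambda>k. B k j) = 0" by (simp add: tinner_def)
  hence "(\<Sum>k\<in>D. (cmod (B k j))^2) = 0" using tinner_self_Re[of D "\<lambda>k. B k j"] by simp
  hence "\<forall>k\<in>D. (cmod (B k j))^2 = 0" using fin by (simp add: sum_nonneg_eq_0_iff)
  thus "B i j = 0" using i by simp
qed

lemma mp_exists:
  assumes fin: "finite D" and tA: "is_tensor D A"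
  shows "\<exists>X. pen D (id_tensor D) (id_tensor D) A X"
proof -
  define H where "H = ein D (ctrans A) A"
  have tH: "is_tensor D H" and hH: "ctrans H = H" by (simp_all add: H_def ctrans_ein)
  obtain U l where U: "tunitary D U" "H = spec D U l" using spectral[OF fin tH hH] by blast
  define f where "f = (\<lambda>t::real. if t = 0 then 0 else 1 / t)"
  define P where "P = spec D U (\<lambda>k. f (l k))"
  define E where "E = spec D U (\<lambda>k. f (l k) * l k)"
  define G where "G = spec D U (\<lambda>k. 1 - f (l k) * l k)"
  have PH: "ein D P H = E" unfolding P_def E_def U(2) spec_mult[OF fin U(1)] ..
  have HP: "ein D H P = E" unfolding P_def E_def U(2) spec_mult[OF fin U(1)] by (simp add: mult.commute)
  have EG: "tadd E G = id_tensor D" unfolding E_def G_def spec_add[OF fin] spec_one[OF fin U(1), symmetric] by simp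
  have hP: "ctrans P = P" by (simp add: P_def)
  have hG: "ctrans G = G" by (simp add: G_def)
  have "ein D (ctrans (ein D A G)) (ein D A G) = ein D G (ein D H G)"
    by (simp add: ctrans_ein hG H_def ein_assoc)
  also have "\<dots> = spec D U (\<lambda>k. (1 - f (l k) * l k) * (l k * (1 - f (l k) * l k)))"
    unfolding G_def U(2) spec_mult[OF fin U(1)] ..
  also have "\<dots> = spec D U (\<lambda>_. 0)" by (rule spec_cong) (simp add: f_def)
  finally have gz: "ein D (ctrans (ein D A G)) (ein D A G) = spec D U (\<lambda>_. 0)" .
  have "ein D A G = (\<lambda>i j. 0)" using gram_zero[OF fin is_tensor_ein gz[unfolded spec_zero]] .
  hence AE: "ein D A E = A"
  proof -
    assume AG: "ein D A G = (\<lambda>i j. 0)"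
    have "A = ein D A (tadd E G)" using EG tA fin by (simp add: ein_id_right)
    also have "\<dots> = ein D A E" unfolding ein_tadd AG by (simp add: tadd_def)
    finally show ?thesis by simp
  qed
  define X where "X = ein D P (ctrans A)"
  have "pen D (id_tensor D) (id_tensor D) A X"
    unfolding pen_id[OF fin]
  proof (intro conjI)
    show "is_tensor D X" by (simp add: X_def)
    show "ein D (ein D A X) A = A" using AE unfolding X_def E_def[symmetric] PH[symmetric] H_def
      by (simp add: ein_assoc)
    have PHP: "ein D P (ein D H P) = P" unfolding P_def U(2) spec_mult[OF fin U(1)]
      by (rule spec_cong) (simp add: f_def)
    show "ein D (ein D X A) X = X" unfolding X_def using arg_cong[OF PHP, of "\<lambda>Z. ein D Z (ctrans A)"] unfolding H_def
      by (simp add: ein_assoc)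
    show "ctrans (ein D A X) = ein D A X" by (simp add: X_def ctrans_ein hP ein_assoc)
    have "ein D X A = E" unfolding X_def PH[symmetric] H_def by (simp add: ein_assoc)
    thus "ctrans (ein D X A) = ein D X A" by (simp add: E_def)
  qed
  thus ?thesis by blast
qed

lemma mpinv_pen_holds:
  assumes fin: "finite D" and tA: "is_tensor D A"
  shows "pen D (id_tensor D) (id_tensor D) A (mpinv D A)"
proof -
  obtain X where X: "pen D (id_tensor D) (id_tensor D) A X" using mp_exists[OF fin tA] by blast
  have "\<exists>!X. pen D (id_tensor D) (id_tensor D) A X"
  proof (rule ex1I[of _ X])
    show "pen D (id_tensor D) (id_tensor D) A X" by (rule X)
    fix Y assume "pen D (id_tensor D) (id_tensor D) A Y"
    thus "Y = X" using mp_unique[OF fin tA X] by simp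
  qed
  thus ?thesis unfolding mpinv_pen by (rule theI')
qed

locale wsetup =
  fixes D :: "mindex set" and SM SMi SN SNi A :: tensor
  assumes fin: "finite D" and tA: "is_tensor D A"
    and tSM: "is_tensor D SM" and tSMi: "is_tensor D SMi" and tSN: "is_tensor D SN" and tSNi: "is_tensor D SNi"
    and hSM: "ctrans SM = SM" and hSN: "ctrans SN = SN"
    and iM1: "ein D SM SMi = id_tensor D" and iM2: "ein D SMi SM = id_tensor D"
    and iN1: "ein D SN SNi = id_tensor D" and iN2: "ein D SNi SN = id_tensor D"
begin

definition "At = ein D SM (ein D A SNi)"

lemma cM1[simp]: "is_tensor D Z \<Longrightarrow> ein D SM (ein D SMi Z) = Z" using assoc_rule[OF iM1] ein_id_left[OF fin] by simp
lemma cM2[simp]: "is_tensor D Z \<Longrightarrow> ein D SMi (ein D SM Z) = Z" using assoc_rule[OF iM2] ein_id_left[OF fin] by simp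
lemma cN1[simp]: "is_tensor D Z \<Longrightarrow> ein D SN (ein D SNi Z) = Z" using assoc_rule[OF iN1] ein_id_left[OF fin] by simp
lemma cN2[simp]: "is_tensor D Z \<Longrightarrow> ein D SNi (ein D SN Z) = Z" using assoc_rule[OF iN2] ein_id_left[OF fin] by simp

lemma hSMi: "ctrans SMi = SMi"
proof -
  have "ein D (ctrans SMi) SM = id_tensor D" using arg_cong[OF iM1, of ctrans] by (simp add: ctrans_ein hSM)
  thus ?thesis using inv_unique[OF fin _ tSMi _ iM1] tSMi by simp
qed

lemma hSNi: "ctrans SNi = SNi"
proof -
  have "ein D (ctrans SNi) SN = id_tensor D" using arg_cong[OF iN1, of ctrans] by (simp add: ctrans_ein hSN)
  thus ?thesis using inv_unique[OF fin _ tSNi _ iN1] tSNi by simp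
qed

lemma tAt[simp]: "is_tensor D At" by (simp add: At_def)

lemma hA: "A = ein D SMi (ein D At SN)"
  unfolding At_def ein_assoc using tA tSNi by (simp add: iN2 ein_id_right[OF fin])

lemma trans_a:
  assumes X: "pen D (ein D SM SM) (ein D SN SN) A X"
  shows "pen D (id_tensor D) (id_tensor D) At (ein D SN (ein D X SMi))"
proof -
  have tX: "is_tensor D X" and AXA: "ein D (ein D A X) A = A" and XAX: "ein D (ein D X A) X = X"
    and h1: "ctrans (ein D (ein D SM SM) (ein D A X)) = ein D (ein D SM SM) (ein D A X)"
    and h2: "ctrans (ein D (ein D SN SN) (ein D X A)) = ein D (ein D SN SN) (ein D X A)"
    using X by (auto simp: pen_def)
  have r1: "ein D A (ein D X (ein D A Z)) = ein D A Z" for Z using AXA by (metis ein_assoc)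
  have r2: "ein D X (ein D A (ein D X Z)) = ein D X Z" for Z using XAX by (metis ein_assoc)
  note [simp] = tX tA tSM tSMi tSN tSNi
  define P where "P = ein D (ein D SM SM) (ein D A X)"
  define Q where "Q = ein D (ein D SN SN) (ein D X A)"
  have e1: "ein D At (ein D SN (ein D X SMi)) = ein D SMi (ein D P SMi)"
    by (simp add: At_def P_def ein_assoc)
  have e2: "ein D (ein D SN (ein D X SMi)) At = ein D SNi (ein D Q SNi)"
    by (simp add: At_def Q_def ein_assoc)
  show ?thesis unfolding pen_id[OF fin]
  proof (intro conjI)
    show "is_tensor D (ein D SN (ein D X SMi))" by simp
    show "ein D (ein D At (ein D SN (ein D X SMi))) At = At"
      by (simp add: At_def ein_assoc r1)
    show "ein D (ein D (ein D SN (ein D X SMi)) At) (ein D SN (ein D X SMi)) = ein D SN (ein D X SMi)"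
      by (simp add: At_def ein_assoc r2)
    show "ctrans (ein D At (ein D SN (ein D X SMi))) = ein D At (ein D SN (ein D X SMi))"
      unfolding e1 using h1[folded P_def] by (simp add: ctrans_ein hSMi ein_assoc)
    show "ctrans (ein D (ein D SN (ein D X SMi)) At) = ein D (ein D SN (ein D X SMi)) At"
      unfolding e2 using h2[folded Q_def] by (simp add: ctrans_ein hSNi ein_assoc)
  qed
qed

lemma trans_b:
  assumes Y: "pen D (id_tensor D) (id_tensor D) At Y"
  shows "pen D (ein D SM SM) (ein D SN SN) A (ein D SNi (ein D Y SM))"
proof -
  have tY: "is_tensor D Y" and s0: "ein D (ein D At Y) At = At" and s0': "ein D (ein D Y At) Y = Y"
    and h1: "ctrans (ein D At Y) = ein D At Y" and h2: "ctrans (ein D Y At) = ein D Y At"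
    using Y unfolding pen_id[OF fin] by auto
  have r1: "ein D At (ein D Y (ein D At Z)) = ein D At Z" for Z using s0 by (metis ein_assoc)
  have r2: "ein D Y (ein D At (ein D Y Z)) = ein D Y Z" for Z using s0' by (metis ein_assoc)
  note [simp] = tY tA tSM tSMi tSN tSNi
  define P where "P = ein D At Y"
  define Q where "Q = ein D Y At"
  have e1: "ein D (ein D SM SM) (ein D A (ein D SNi (ein D Y SM))) = ein D SM (ein D P SM)"
    by (subst hA) (simp add: P_def ein_assoc)
  have e2: "ein D (ein D SN SN) (ein D (ein D SNi (ein D Y SM)) A) = ein D SN (ein D Q SN)"
    by (subst hA) (simp add: Q_def ein_assoc)
  show ?thesis unfolding pen_def
  proof (intro conjI)
    show "is_tensor D (ein D SNi (ein D Y SM))" by simp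
    show "ein D (ein D A (ein D SNi (ein D Y SM))) A = A"
      by (subst (1 2 3) hA) (simp add: ein_assoc r1)
    show "ein D (ein D (ein D SNi (ein D Y SM)) A) (ein D SNi (ein D Y SM)) = ein D SNi (ein D Y SM)"
      by (subst hA) (simp add: ein_assoc r2)
    show "ctrans (ein D (ein D SM SM) (ein D A (ein D SNi (ein D Y SM)))) = ein D (ein D SM SM) (ein D A (ein D SNi (ein D Y SM)))"
      unfolding e1 using h1[folded P_def] by (simp add: ctrans_ein hSM ein_assoc)
    show "ctrans (ein D (ein D SN SN) (ein D (ein D SNi (ein D Y SM)) A)) = ein D (ein D SN SN) (ein D (ein D SNi (ein D Y SM)) A)"
      unfolding e2 using h2[folded Q_def] by (simp add: ctrans_ein hSN ein_assoc)
  qed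
qed

lemma wmp_char: "wmp D (ein D SM SM) (ein D SN SN) A = ein D SNi (ein D (mpinv D At) SM)"
proof -
  define Y0 where "Y0 = mpinv D At"
  have Y0: "pen D (id_tensor D) (id_tensor D) At Y0" unfolding Y0_def by (rule mpinv_pen_holds[OF fin tAt])
  have "\<exists>!X. pen D (ein D SM SM) (ein D SN SN) A X"
  proof (rule ex1I[of _ "ein D SNi (ein D Y0 SM)"])
    show "pen D (ein D SM SM) (ein D SN SN) A (ein D SNi (ein D Y0 SM))" by (rule trans_b[OF Y0])
    fix X assume X: "pen D (ein D SM SM) (ein D SN SN) A X"
    have tX: "is_tensor D X" using X by (simp add: pen_def)
    have "ein D SN (ein D X SMi) = Y0" using mp_unique[OF fin tAt trans_a[OF X] Y0] .
    hence "ein D SNi (ein D Y0 SM) = ein D SNi (ein D (ein D SN (ein D X SMi)) SM)" by simp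
    also have "\<dots> = X" using tX tSMi tSM by (simp add: ein_assoc iM2 ein_id_right[OF fin])
    finally show "X = ein D SNi (ein D Y0 SM)" by simp
  qed
  thus ?thesis unfolding wmp_pen Y0_def[symmetric]
    using trans_b[OF Y0] by (simp add: the1_equality)
qed

end

definition opn :: "mindex set \<Rightarrow> tensor \<Rightarrow> real" where
  "opn D B = Sup {tnorm D (einv D B Y) | Y. is_vtensor D Y \<and> tnorm D Y = 1}"

lemma tnorm_scale: "tnorm D (\<lambda>i. c * Y i) = cmod c * tnorm D Y"
proof -
  have "tinner D (\<lambda>i. c * Y i) (\<lambda>i. c * Y i) = c * cnj c * tinner D Y Y"
    unfolding tinner_scale_left tinner_scale_right by (simp add: mult_ac)
  also have "c * cnj c = of_real ((cmod c)^2)" by (metis complex_norm_square)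
  finally have "Re (tinner D (\<lambda>i. c * Y i) (\<lambda>i. c * Y i)) = (cmod c)^2 * Re (tinner D Y Y)"
    by (simp del: of_real_power)
  thus ?thesis by (simp add: tnorm_def real_sqrt_mult)
qed

lemma tnorm_zero: "finite D \<Longrightarrow> is_vtensor D Y \<Longrightarrow> tnorm D Y = 0 \<longleftrightarrow> Y = (\<lambda>i. 0)"
  using tinner_self_zero[of D Y] tinner_self_ge0[of D Y] by (simp add: tnorm_def)

lemma entry_le1: assumes "finite D" "k \<in> D" "tnorm D Y = 1" shows "cmod (Y k) \<le> 1"
proof -
  have "(cmod (Y k))^2 \<le> (\<Sum>i\<in>D. (cmod (Y i))^2)" using assms by (intro member_le_sum) auto
  also have "\<dots> = 1" using tnorm_sq[of D Y] assms by (simp add: tinner_self_Re)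
  finally show ?thesis by (simp add: power_le_one_iff abs_le_square_iff)
qed

lemma einv_bound:
  assumes fin: "finite D" and Y: "tnorm D Y = 1" and i: "i \<in> D"
  shows "cmod (einv D B Y i) \<le> (\<Sum>k\<in>D. cmod (B i k))"
proof -
  have "cmod (einv D B Y i) = cmod (\<Sum>k\<in>D. B i k * Y k)" using i by (simp add: einv_def)
  also have "\<dots> \<le> (\<Sum>k\<in>D. cmod (B i k * Y k))" by (rule norm_sum)
  also have "\<dots> \<le> (\<Sum>k\<in>D. cmod (B i k))"
    by (intro sum_mono) (simp add: norm_mult mult_left_le entry_le1[OF fin _ Y])
  finally show ?thesis .
qed

lemma opn_bdd: assumes fin: "finite D"
  shows "bdd_above {tnorm D (einv D B Y) | Y. is_vtensor D Y \<and> tnorm D Y = 1}"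
proof -
  define C where "C = sqrt (\<Sum>i\<in>D. (\<Sum>k\<in>D. cmod (B i k))^2)"
  have "tnorm D (einv D B Y) \<le> C" if Y: "tnorm D Y = 1" for Y
  proof -
    have "(tnorm D (einv D B Y))^2 = (\<Sum>i\<in>D. (cmod (einv D B Y i))^2)" by (simp add: tnorm_sq tinner_self_Re)
    also have "\<dots> \<le> (\<Sum>i\<in>D. (\<Sum>k\<in>D. cmod (B i k))^2)"
      by (intro sum_mono power_mono einv_bound[OF fin Y]) auto
    finally show ?thesis unfolding C_def using tnorm_ge0 by (metis real_le_rsqrt)
  qed
  thus ?thesis by (auto intro!: bdd_aboveI[of _ C])
qed

lemma numrad_bdd: assumes fin: "finite D"
  shows "bdd_above {cmod (tinner D (einv D B X) X) | X. is_vtensor D X \<and> tnorm D X = 1}"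
proof -
  define C where "C = (\<Sum>i\<in>D. \<Sum>k\<in>D. cmod (B i k))"
  have "cmod (tinner D (einv D B X) X) \<le> C" if X: "tnorm D X = 1" for X
  proof -
    have "cmod (tinner D (einv D B X) X) \<le> (\<Sum>i\<in>D. cmod (cnj (X i) * einv D B X i))"
      unfolding tinner_def by (rule norm_sum)
    also have "\<dots> \<le> C" unfolding C_def
    proof (intro sum_mono)
      fix i assume i: "i \<in> D"
      have "cmod (cnj (X i) * einv D B X i) = cmod (X i) * cmod (einv D B X i)" by (simp add: norm_mult)
      also have "\<dots> \<le> 1 * (\<Sum>k\<in>D. cmod (B i k))"
        by (intro mult_mono entry_le1[OF fin i X] einv_bound[OF fin X i]) (auto intro: sum_nonneg)
      finally show "cmod (cnj (X i) * einv D B X i) \<le> (\<Sum>k\<in>D. cmod (B i k))" by simp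
    qed
    finally show ?thesis .
  qed
  thus ?thesis by (auto intro!: bdd_aboveI[of _ C])
qed

lemma unit_exists: "finite D \<Longrightarrow> d \<in> D \<Longrightarrow> is_vtensor D (delta d) \<and> tnorm D (delta d) = 1"
  by (auto simp: is_vtensor_def delta_def tnorm_def tinner_def if_distrib[of cnj] if_distrib[of "\<lambda>x. x * _"] cong: if_cong)

lemma opn_ge: assumes fin: "finite D" and Y: "is_vtensor D Y"
  shows "tnorm D (einv D B Y) \<le> opn D B * tnorm D Y"
proof (cases "tnorm D Y = 0")
  case True
  hence "Y = (\<lambda>i. 0)" using tnorm_zero[OF fin Y] by simp
  thus ?thesis by (simp add: tnorm_def tinner_def)
next
  case False
  define t where "t = tnorm D Y"
  have t: "t > 0" using False tnorm_ge0[of D Y] t_def by simp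
  define u where "u = (\<lambda>i. complex_of_real (1/t) * Y i)"
  have u: "is_vtensor D u" "tnorm D u = 1" using Y t unfolding u_def tnorm_scale by (auto simp: is_vtensor_def t_def norm_divide)
  have "tnorm D (einv D B u) \<le> opn D B" unfolding opn_def
    by (rule cSup_upper[OF _ opn_bdd[OF fin]]) (use u in blast)
  also have "tnorm D (einv D B u) = (1/t) * tnorm D (einv D B Y)" unfolding u_def einv_scale tnorm_scale
    using t by (simp add: norm_divide)
  finally show ?thesis using t by (simp add: t_def field_simps)
qed

lemma opn_nonneg: assumes fin: "finite D" and ne: "D \<noteq> {}" shows "0 \<le> opn D B"
proof -
  obtain d where d: "d \<in> D" using ne by blast
  have "0 \<le> tnorm D (einv D B (delta d))" by (rule tnorm_ge0)
  also have "\<dots> \<le> opn D B" unfolding opn_def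
    by (rule cSup_upper[OF _ opn_bdd[OF fin]]) (use unit_exists[OF fin d] in blast)
  finally show ?thesis .
qed

lemma numrad_ge: assumes fin: "finite D" and X: "is_vtensor D X"
  shows "cmod (tinner D (einv D B X) X) \<le> numrad D B * (tnorm D X)^2"
proof (cases "tnorm D X = 0")
  case True
  hence "X = (\<lambda>i. 0)" using tnorm_zero[OF fin X] by simp
  thus ?thesis by (simp add: tinner_def tnorm_def)
next
  case False
  define t where "t = tnorm D X"
  have t: "t > 0" using False tnorm_ge0[of D X] t_def by simp
  define u where "u = (\<lambda>i. complex_of_real (1/t) * X i)"
  have u: "is_vtensor D u" "tnorm D u = 1" using X t unfolding u_def tnorm_scale by (auto simp: is_vtensor_def t_def norm_divide)
  have "cmod (tinner D (einv D B u) u) \<le> numrad D B" unfolding numrad_def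
    by (rule cSup_upper[OF _ numrad_bdd[OF fin]]) (use u in blast)
  also have "tinner D (einv D B u) u = complex_of_real (1/t) * complex_of_real (1/t) * tinner D (einv D B X) X"
    unfolding u_def einv_scale tinner_scale_left tinner_scale_right by simp
  finally have "(1/t) * (1/t) * cmod (tinner D (einv D B X) X) \<le> numrad D B"
    using t by (simp add: norm_mult norm_divide)
  thus ?thesis using t by (simp add: t_def field_simps power2_eq_square)
qed

lemma einv_lin: "einv D B (\<lambda>i. x i + c * y i) = (\<lambda>i. einv D B x i + c * einv D B y i)"
  by (intro ext) (simp add: einv_def distrib_left sum.distrib sum_distrib_left mult_ac)

lemma tinner_lin: "tinner D (\<lambda>i. u i + c * v i) (\<lambda>i. x i + c * y i) =
   tinner D u x + cnj c * tinner D u y + c * tinner D v x + c * cnj c * tinner D v y"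
  by (simp add: tinner_def algebra_simps sum.distrib sum_distrib_left)

lemma polar_bound:
  assumes fin: "finite D" and x: "is_vtensor D x" "tnorm D x = 1"
  shows "tnorm D (einv D B x) \<le> 2 * numrad D B"
proof (cases "tnorm D (einv D B x) = 0")
  case True
  have "cmod (tinner D (einv D B x) x) \<le> numrad D B"
    using numrad_ge[OF fin x(1), of B] x(2) by simp
  hence "0 \<le> numrad D B" using norm_ge_zero[of "tinner D (einv D B x) x"] by linarith
  thus ?thesis using True by simp
next
  case False
  define t where "t = tnorm D (einv D B x)"
  have t: "t > 0" using False tnorm_ge0[of D "einv D B x"] t_def by simp
  define y where "y = (\<lambda>i. complex_of_real (1/t) * einv D B x i)"
  have vy: "is_vtensor D y" by (simp add: y_def is_vtensor_def einv_def)
  have ty: "tnorm D y = 1" unfolding y_def tnorm_scale using t by (simp add: t_def norm_divide)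
  have xy: "tinner D (einv D B x) y = complex_of_real t"
  proof -
    have "tinner D (einv D B x) y = complex_of_real (1/t) * tinner D (einv D B x) (einv D B x)"
      unfolding y_def tinner_scale_right by simp
    also have "tinner D (einv D B x) (einv D B x) = complex_of_real (t^2)"
      by (simp add: t_def tnorm_sq tinner_self del: of_real_power)
    finally show ?thesis using t by (simp add: power2_eq_square)
  qed
  have xx: "tinner D x x = 1" using x(2) tnorm_sq[of D x] tinner_self[of D x] by (simp add: tinner_self_Re)
  have yy: "tinner D y y = 1" using ty tnorm_sq[of D y] tinner_self[of D y] by (simp add: tinner_self_Re)
  define w where "w = numrad D B"
  define z where "z = (\<lambda>c i. x i + c * y i)"
  define q where "q = (\<lambda>c. tinner D (einv D B (z c)) (z c))"
  define r where "r = (\<lambda>c. tinner D (z c) (z c))"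
  have q: "q c = tinner D (einv D B x) x + cnj c * tinner D (einv D B x) y + c * tinner D (einv D B y) x
     + c * cnj c * tinner D (einv D B y) y" for c
    unfolding q_def z_def einv_lin tinner_lin ..
  have r: "r c = tinner D x x + cnj c * tinner D x y + c * tinner D y x + c * cnj c * tinner D y y" for c
    unfolding r_def z_def tinner_lin ..
  have vz: "is_vtensor D (z c)" for c using x(1) vy by (simp add: z_def is_vtensor_def)
  have qb: "cmod (q c) \<le> w * Re (r c)" for c
    using numrad_ge[OF fin vz, of B c] unfolding q_def r_def w_def tnorm_sq .
  have e4: "q 1 + \<i> * q \<i> - q (-1) - \<i> * q (-\<i>) = 4 * complex_of_real t"
    unfolding q xy by (simp add: algebra_simps)
  have "4 * t = cmod (4 * complex_of_real t)" using t by (simp add: norm_mult)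
  also have "\<dots> = cmod (q 1 + \<i> * q \<i> - q (-1) - \<i> * q (-\<i>))" by (simp only: e4)
  also have "\<dots> \<le> cmod (q 1) + cmod (q \<i>) + cmod (q (-1)) + cmod (q (-\<i>))"
  proof -
    have a1: "cmod (q 1 + \<i> * q \<i> - q (-1) - \<i> * q (-\<i>)) \<le> cmod (q 1 + \<i> * q \<i> - q (-1)) + cmod (\<i> * q (-\<i>))"
      by (rule norm_triangle_ineq4)
    have a2: "cmod (q 1 + \<i> * q \<i> - q (-1)) \<le> cmod (q 1 + \<i> * q \<i>) + cmod (q (-1))"
      by (rule norm_triangle_ineq4)
    have a3: "cmod (q 1 + \<i> * q \<i>) \<le> cmod (q 1) + cmod (\<i> * q \<i>)"
      by (rule norm_triangle_ineq)
    have a4: "cmod (\<i> * q \<i>) = cmod (q \<i>)" "cmod (\<i> * q (-\<i>)) = cmod (q (-\<i>))" by (simp_all add: norm_mult)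
    show ?thesis using a1 a2 a3 a4 by linarith
  qed
  also have "\<dots> \<le> w * Re (r 1) + w * Re (r \<i>) + w * Re (r (-1)) + w * Re (r (-\<i>))"
    by (intro add_mono qb)
  also have "\<dots> = w * Re (r 1 + r \<i> + r (-1) + r (-\<i>))" by (simp add: algebra_simps)
  also have "r 1 + r \<i> + r (-1) + r (-\<i>) = 8" unfolding r xx yy by (simp add: algebra_simps)
  finally show ?thesis by (simp add: t_def w_def)
qed

lemma opn_le_numrad: assumes fin: "finite D" and ne: "D \<noteq> {}"
  shows "opn D B \<le> 2 * numrad D B"
  unfolding opn_def
proof (rule cSup_least)
  obtain d where "d \<in> D" using ne by blast
  thus "{tnorm D (einv D B Y) | Y. is_vtensor D Y \<and> tnorm D Y = 1} \<noteq> {}" using unit_exists[OF fin] by blast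
  show "\<And>v. v \<in> {tnorm D (einv D B Y) | Y. is_vtensor D Y \<and> tnorm D Y = 1} \<Longrightarrow> v \<le> 2 * numrad D B"
    using polar_bound[OF fin] by blast
qed

lemma finite_idx: "finite (idx I N)"
proof -
  have inj: "inj_on (\<lambda>f. restrict f {..<N}) (idx I N)"
  proof (rule inj_onI)
    fix f g assume f: "f \<in> idx I N" and g: "g \<in> idx I N" and eq: "restrict f {..<N} = restrict g {..<N}"
    show "f = g"
    proof
      fix k show "f k = g k"
      proof (cases "k < N")
        case True thus ?thesis using fun_cong[OF eq, of k] by simp
      next
        case False thus ?thesis using f g by (simp add: idx_def)
      qed
    qed
  qed
  have "(\<lambda>f. restrict f {..<N}) ` idx I N \<subseteq> PiE {..<N} (\<lambda>k. {..<I k})"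
    by (intro image_subsetI) (simp add: restrict_PiE_iff idx_def)
  hence "finite ((\<lambda>f. restrict f {..<N}) ` idx I N)" by (rule finite_subset) (simp add: finite_PiE)
  thus ?thesis using finite_imageD[OF _ inj] by blast
qed

lemma ein_zero_left: "ein D (\<lambda>i j. 0) B = (\<lambda>i j. 0)"
  by (intro ext) (simp add: ein_def)

lemma ein_zero_right: "ein D B (\<lambda>i j. 0) = (\<lambda>i j. 0)"
  by (intro ext) (simp add: ein_def)

lemma inv_einv: "finite D \<Longrightarrow> ein D P Q = id_tensor D \<Longrightarrow> is_vtensor D Y \<Longrightarrow> einv D P (einv D Q Y) = Y"
  by (metis einv_ein einv_id)

lemma wnorm_eq: "ctrans S = S \<Longrightarrow> wnorm D (ein D S S) Z = tnorm D (einv D S Z)"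
  unfolding wnorm_def tnorm_def einv_ein tinner_adj by simp

lemma set_transfer:
  assumes f: "\<And>X. is_vtensor D X \<Longrightarrow> f X = g (einv D T X)"
    and h: "\<And>X. is_vtensor D X \<Longrightarrow> h X = tnorm D (einv D T X)"
    and inv: "\<And>Y. is_vtensor D Y \<Longrightarrow> einv D T (einv D Ti Y) = Y"
  shows "{f X | X. is_vtensor D X \<and> h X = 1} = {g Y | Y. is_vtensor D Y \<and> tnorm D Y = 1}"
proof (rule equalityI; rule subsetI)
  fix v assume "v \<in> {f X | X. is_vtensor D X \<and> h X = 1}"
  then obtain X where X: "is_vtensor D X" "h X = 1" "v = f X" by blast
  thus "v \<in> {g Y | Y. is_vtensor D Y \<and> tnorm D Y = 1}"
    using f[OF X(1)] h[OF X(1)] by (intro CollectI exI[of _ "einv D T X"]) simp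
next
  fix v assume "v \<in> {g Y | Y. is_vtensor D Y \<and> tnorm D Y = 1}"
  then obtain Y where Y: "is_vtensor D Y" "tnorm D Y = 1" "v = g Y" by blast
  have vX: "is_vtensor D (einv D Ti Y)" by simp
  thus "v \<in> {f X | X. is_vtensor D X \<and> h X = 1}"
    using f[OF vX] h[OF vX] inv[OF Y(1)] Y by (intro CollectI exI[of _ "einv D Ti Y"]) simp
qed

theorem theorem6p16:
  fixes I :: "nat \<Rightarrow> nat" and N :: nat and A M Nw :: tensor
  defines "D \<equiv> idx I N"
  assumes "is_tensor D A" and "A \<noteq> zero_tensor"
    and "hpd D M" and "hpd D Nw"
  shows "1 \<le> wopnorm D M Nw A * wopnorm D Nw M (wmp D M Nw A)
       \<and> wopnorm D M Nw A * wopnorm D Nw M (wmp D M Nw A)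
           \<le> 4 * numrad D (ein D (ein D (tsqrt D M) A) (tinv D (tsqrt D Nw)))
               * numrad D (mpinv D (ein D (ein D (tsqrt D M) A) (tinv D (tsqrt D Nw))))"
proof -
  note tA = assms(2) and nz = assms(3) and hM = assms(4) and hN = assms(5)
  have fin: "finite D" unfolding D_def by (rule finite_idx)
  have ne: "D \<noteq> {}"
  proof
    assume "D = {}"
    hence "A = zero_tensor" using tA by (intro ext) (simp add: is_tensor_def zero_tensor_def)
    thus False using nz by simp
  qed
  define SM where "SM = tsqrt D M"
  define SN where "SN = tsqrt D Nw"
  define SMi where "SMi = tinv D SM"
  define SNi where "SNi = tinv D SN"
  have FM: "hpd D SM" "ein D SM SM = M" "is_tensor D SMi" "ein D SM SMi = id_tensor D" "ein D SMi SM = id_tensor D"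
    using sqrt_facts[OF fin hM] unfolding SM_def SMi_def by auto
  have FN: "hpd D SN" "ein D SN SN = Nw" "is_tensor D SNi" "ein D SN SNi = id_tensor D" "ein D SNi SN = id_tensor D"
    using sqrt_facts[OF fin hN] unfolding SN_def SNi_def by auto
  have tSM: "is_tensor D SM" and hSM: "ctrans SM = SM" using FM(1) by (auto simp: hpd_def)
  have tSN: "is_tensor D SN" and hSN: "ctrans SN = SN" using FN(1) by (auto simp: hpd_def)
  interpret W: wsetup D SM SMi SN SNi A
    by (unfold_locales) (use fin tA tSM tSN hSM hSN FM FN in auto)
  define At where "At = W.At"
  have AtE: "At = ein D SM (ein D A SNi)" by (simp add: At_def W.At_def)
  define Ad where "Ad = mpinv D At"
  have stAt: "ein D (ein D (tsqrt D M) A) (tinv D (tsqrt D Nw)) = At"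
    by (simp add: AtE SM_def SN_def SNi_def ein_assoc)
  have wm: "wmp D M Nw A = ein D SNi (ein D Ad SM)"
    using W.wmp_char unfolding FM(2) FN(2) by (simp add: Ad_def At_def)
  have tAt: "is_tensor D At" by (simp add: AtE)
  have e1: "wopnorm D M Nw A = opn D At"
  proof -
    have "{wnorm D M (einv D A X) | X. is_vtensor D X \<and> wnorm D Nw X = 1}
        = {tnorm D (einv D At Y) | Y. is_vtensor D Y \<and> tnorm D Y = 1}"
    proof (rule set_transfer[where T = SN and Ti = SNi])
      fix X assume X: "is_vtensor D X"
      show "wnorm D M (einv D A X) = tnorm D (einv D At (einv D SN X))"
        unfolding FM(2)[symmetric] wnorm_eq[OF hSM] AtE einv_ein inv_einv[OF fin FN(5) X] ..
      show "wnorm D Nw X = tnorm D (einv D SN X)" unfolding FN(2)[symmetric] wnorm_eq[OF hSN] ..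
    next
      fix Y assume "is_vtensor D Y" thus "einv D SN (einv D SNi Y) = Y" by (rule inv_einv[OF fin FN(4)])
    qed
    thus ?thesis by (simp add: wopnorm_def opn_def)
  qed
  have e2: "wopnorm D Nw M (wmp D M Nw A) = opn D Ad"
  proof -
    have "{wnorm D Nw (einv D (wmp D M Nw A) X) | X. is_vtensor D X \<and> wnorm D M X = 1}
        = {tnorm D (einv D Ad Y) | Y. is_vtensor D Y \<and> tnorm D Y = 1}"
    proof (rule set_transfer[where T = SM and Ti = SMi])
      fix X assume X: "is_vtensor D X"
      have vv: "is_vtensor D (einv D Ad (einv D SM X))" by simp
      show "wnorm D Nw (einv D (wmp D M Nw A) X) = tnorm D (einv D Ad (einv D SM X))"
        unfolding wm unfolding FN(2)[symmetric] wnorm_eq[OF hSN] einv_ein inv_einv[OF fin FN(4) vv] ..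
      show "wnorm D M X = tnorm D (einv D SM X)" unfolding FM(2)[symmetric] wnorm_eq[OF hSM] ..
    next
      fix Y assume "is_vtensor D Y" thus "einv D SM (einv D SMi Y) = Y" by (rule inv_einv[OF fin FM(4)])
    qed
    thus ?thesis by (simp add: wopnorm_def opn_def)
  qed
  have penAt: "pen D (id_tensor D) (id_tensor D) At Ad" unfolding Ad_def by (rule mpinv_pen_holds[OF fin tAt])
  hence AAA: "ein D (ein D At Ad) At = At" by (simp add: pen_def)
  have Atnz: "At \<noteq> (\<lambda>i j. 0)"
  proof
    assume "At = (\<lambda>i j. 0)"
    hence "A = ein D SMi (ein D (\<lambda>i j. 0) SN)" using W.hA by (simp add: At_def)
    hence "A = zero_tensor" unfolding ein_zero_left ein_zero_right zero_tensor_def .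
    thus False using nz by simp
  qed
  then obtain i j where ij: "At i j \<noteq> 0" by (meson ext)
  have iD: "i \<in> D" and jD: "j \<in> D" using ij tAt by (auto simp: is_tensor_def)
  define y where "y = einv D At (delta j)"
  have vy: "is_vtensor D y" by (simp add: y_def)
  have "y i \<noteq> 0" using ij iD by (simp add: y_def einv_delta[OF fin jD])
  hence "y \<noteq> (\<lambda>i. 0)" by auto
  hence ty: "tnorm D y > 0" using tnorm_zero[OF fin vy] tnorm_ge0[of D y] by linarith
  have yy: "einv D At (einv D Ad y) = y" unfolding y_def using AAA by (metis einv_ein)
  define a where "a = opn D At"
  define b where "b = opn D Ad"
  have a0: "0 \<le> a" and b0: "0 \<le> b" unfolding a_def b_def using opn_nonneg[OF fin ne] by auto
  have "tnorm D y \<le> a * tnorm D (einv D Ad y)" unfolding a_def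
    using opn_ge[OF fin, of "einv D Ad y" At] yy by simp
  also have "\<dots> \<le> a * (b * tnorm D y)" unfolding b_def
    using opn_ge[OF fin vy, of Ad] a0 by (intro mult_left_mono) (auto simp: a_def)
  finally have "tnorm D y * 1 \<le> tnorm D y * (a * b)" by (simp add: mult_ac)
  hence c1: "1 \<le> a * b" using ty by (simp only: mult_le_cancel_left_pos)
  have la: "a \<le> 2 * numrad D At" unfolding a_def by (rule opn_le_numrad[OF fin ne])
  have lb: "b \<le> 2 * numrad D Ad" unfolding b_def by (rule opn_le_numrad[OF fin ne])
  have "a * b \<le> (2 * numrad D At) * (2 * numrad D Ad)"
    by (rule mult_mono[OF la lb]) (use a0 la b0 in linarith)+
  hence c2: "a * b \<le> 4 * numrad D At * numrad D Ad" by simp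
  show ?thesis unfolding stAt e1 e2 using c1 c2 by (simp add: a_def b_def Ad_def)
qed

end
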